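(* Label the hyperedges so that $|h_1|\le|h_2|\le\dots\le|h_M|$. If $N\ge2$ and $M\ge2$, then $$\lambda_{N-1}\le\max\{|h_M|-1,\ |h_{M-1}|\}.$$ More generally, for every integer $k$ with $1\le k\le\min(N,M)-1$, $$\lambda_{N-k}\le\max_{i=0,\dots,k}\bigl(|h_{M-i}|-k+i\bigr).$$
   Context: Let $\Gamma=(V,H,\mathcal C)$ be a hypergraph with real coefficients: $V=\{v_1,\dots,v_N\}$ is a finite set of vertices, $H=(h_1,\dots,h_M)$ is a finite family of non-empty subsets $h_j\subseteq V$ called hyperedges (repetitions allowed; hyperedges are distinguished by their index), and $\mathcal C=\{C_{v,h}\in\mathbb R\}$ is a family of real coefficients with $C_{v,h}=0$ if and only if $v\notin h$. Standing assumptions: every vertex lies in at least one hyperedge, and $\Gamma$ is connected. The degree of $v$ is $\deg v=\sum_{h\in H}C_{v,h}^2>0$. The vertex normalized Laplacian is $Lf(v)=\frac{1}{\deg v}\sum_{h\in H}C_{v,h}\sum_{w\in V}C_{w,h}f(w)$; its eigenvalues are $\lambda_1\le\dots\le\lambda_N$. The cardinality $|h|$ of a hyperedge is its number of vertices. *)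

theory Defs
  imports "Jordan_Normal_Form.Char_Poly"
begin

text \<open>A hypergraph with real coefficients: vertices 0..N-1, hyperedges 0..M-1,
  coefficient C v j of vertex v in hyperedge j. Hyperedge j is the set of
  vertices with nonzero coefficient.\<close>

definition hedge :: "nat \<Rightarrow> (nat \<Rightarrow> nat \<Rightarrow> real) \<Rightarrow> nat \<Rightarrow> nat set" where
  "hedge N C j = {v. v < N \<and> C v j \<noteq> 0}"

definition hdeg :: "nat \<Rightarrow> (nat \<Rightarrow> nat \<Rightarrow> real) \<Rightarrow> nat \<Rightarrow> real" where
  "hdeg M C v = (\<Sum>j<M. (C v j)^2)"

definition hadj :: "nat \<Rightarrow> nat \<Rightarrow> (nat \<Rightarrow> nat \<Rightarrow> real) \<Rightarrow> nat \<Rightarrow> nat \<Rightarrow> bool" where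
  "hadj N M C v w = (\<exists>j<M. v \<in> hedge N C j \<and> w \<in> hedge N C j)"

definition hconnected :: "nat \<Rightarrow> nat \<Rightarrow> (nat \<Rightarrow> nat \<Rightarrow> real) \<Rightarrow> bool" where
  "hconnected N M C = (\<forall>v<N. \<forall>w<N. (hadj N M C)\<^sup>*\<^sup>* v w)"

definition hlaplacian :: "nat \<Rightarrow> nat \<Rightarrow> (nat \<Rightarrow> nat \<Rightarrow> real) \<Rightarrow> real mat" where
  "hlaplacian N M C = mat N N (\<lambda>(v, w). (1 / hdeg M C v) * (\<Sum>j<M. C v j * C w j))"

definition sorted_eigenvalues :: "real mat \<Rightarrow> real list \<Rightarrow> bool" where
  "sorted_eigenvalues A ls \<longleftrightarrow> length ls = dim_row A \<and> sorted ls \<and>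
     char_poly A = (\<Prod>a\<leftarrow>ls. [:- a, 1:])"

end

theory Submission imports Defs "Jordan_Normal_Form.Schur_Decomposition" begin

definition mv :: "nat \<Rightarrow> (nat\<Rightarrow>nat\<Rightarrow>real) \<Rightarrow> (nat\<Rightarrow>real) \<Rightarrow> nat \<Rightarrow> real" where
 "mv n a x = (\<lambda>v. if v < n then (\<Sum>w<n. a v w * x w) else 0)"
definition ip :: "nat \<Rightarrow> (nat\<Rightarrow>real) \<Rightarrow> (nat\<Rightarrow>real) \<Rightarrow> (nat\<Rightarrow>real) \<Rightarrow> real" where
 "ip n d x y = (\<Sum>v<n. d v * x v * y v)"
definition spn :: "nat \<Rightarrow> (nat \<Rightarrow> nat \<Rightarrow> real) \<Rightarrow> (nat\<Rightarrow>real) set" where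
 "spn m q = {x. \<exists>\<rho>. x = (\<lambda>v. \<Sum>i<m. \<rho> i * q i v)}"
definition zo :: "nat \<Rightarrow> (nat \<Rightarrow> real) \<Rightarrow> bool" where "zo n x = (\<forall>v. n \<le> v \<longrightarrow> x v = 0)"

lemma spn_add: "x \<in> spn m q \<Longrightarrow> y \<in> spn m q \<Longrightarrow> (\<lambda>v. x v + y v) \<in> spn m q"
proof -
  assume "x \<in> spn m q" "y \<in> spn m q"
  then obtain \<rho> \<sigma> where "x = (\<lambda>v. \<Sum>i<m. \<rho> i * q i v)" "y = (\<lambda>v. \<Sum>i<m. \<sigma> i * q i v)"
    unfolding spn_def by blast
  then show ?thesis unfolding spn_def
    by (intro CollectI exI[of _ "\<lambda>i. \<rho> i + \<sigma> i"]) (simp add: distrib_right sum.distrib)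
qed

lemma spn_smult: "x \<in> spn m q \<Longrightarrow> (\<lambda>v. s * x v) \<in> spn m q"
proof -
  assume "x \<in> spn m q"
  then obtain \<rho> where "x = (\<lambda>v. \<Sum>i<m. \<rho> i * q i v)"
    unfolding spn_def by blast
  then show ?thesis unfolding spn_def
    by (intro CollectI exI[of _ "\<lambda>i. s * \<rho> i"]) (simp add: sum_distrib_left mult.assoc)
qed

lemma spn_zero: "(\<lambda>v. 0) \<in> spn m q"
  unfolding spn_def by (intro CollectI exI[of _ "\<lambda>i. 0"]) simp

lemma spn_sum: "finite L \<Longrightarrow> (\<forall>l\<in>L. x l \<in> spn m q) \<Longrightarrow> (\<lambda>v. \<Sum>l\<in>L. f l * x l v) \<in> spn m q"
proof (induction L rule: finite_induct)
  case empty then show ?case using spn_zero by simp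
next
  case (insert l L)
  have "(\<lambda>v. f l * x l v + (\<Sum>l\<in>L. f l * x l v)) \<in> spn m q"
    using insert by (intro spn_add spn_smult) auto
  then show ?case using insert by simp
qed

lemma spn_base: "j < m \<Longrightarrow> q j \<in> spn m q"
  unfolding spn_def
proof (intro CollectI exI[of _ "\<lambda>i. if i = j then 1 else 0"] ext)
  fix v assume "j < m"
  have "(\<Sum>i<m. (if i = j then 1 else 0) * q i v) = (\<Sum>i<m. if i = j then q j v else 0)"
    by (rule sum.cong) auto
  also have "\<dots> = q j v" using \<open>j < m\<close> by simp
  finally show "q j v = (\<Sum>i<m. (if i = j then 1 else 0) * q i v)" by simp
qed

lemma spn_Suc: "x \<in> spn m q \<Longrightarrow> x \<in> spn (Suc m) q"
proof -
  assume "x \<in> spn m q"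
  then obtain \<rho> where x: "x = (\<lambda>v. \<Sum>i<m. \<rho> i * q i v)"
    unfolding spn_def by blast
  show ?thesis unfolding spn_def
  proof (intro CollectI exI[of _ "\<lambda>i. if i < m then \<rho> i else 0"] ext)
    fix v
    have "(\<Sum>i<Suc m. (if i < m then \<rho> i else 0) * q i v) = (\<Sum>i<m. (if i < m then \<rho> i else 0) * q i v)"
      by simp
    also have "\<dots> = x v" unfolding x by (rule sum.cong) auto
    finally show "x v = (\<Sum>i<Suc m. (if i < m then \<rho> i else 0) * q i v)" by simp
  qed
qed

lemma spn_cong: "(\<And>i. i < m \<Longrightarrow> q i = q' i) \<Longrightarrow> spn m q = spn m q'"
proof -
  assume h: "\<And>i. i < m \<Longrightarrow> q i = q' i"
  have "\<And>\<rho> v. (\<Sum>i<m. \<rho> i * q i v) = (\<Sum>i<m. \<rho> i * q' i v)"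
    by (rule sum.cong) (auto simp: h)
  then show ?thesis unfolding spn_def by simp
qed

lemma ip_comm: "ip n d x y = ip n d y x"
  unfolding ip_def by (simp add: mult_ac)

lemma ip_sum_left: "finite I \<Longrightarrow> ip n d (\<lambda>v. \<Sum>i\<in>I. f i * x i v) y = (\<Sum>i\<in>I. f i * ip n d (x i) y)"
  unfolding ip_def
  by (simp add: sum_distrib_left sum_distrib_right mult_ac sum.swap[of _ "{..<n}"])

lemma ip_diff_sum_left: "finite I \<Longrightarrow> ip n d (\<lambda>v. x v - (\<Sum>i\<in>I. f i * z i v)) y = ip n d x y - (\<Sum>i\<in>I. f i * ip n d (z i) y)"
proof -
  assume I: "finite I"
  have "ip n d (\<lambda>v. x v - (\<Sum>i\<in>I. f i * z i v)) y = ip n d x y - ip n d (\<lambda>v. \<Sum>i\<in>I. f i * z i v) y"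
    unfolding ip_def by (simp add: algebra_simps sum_subtractf)
  then show ?thesis using ip_sum_left[OF I] by simp
qed

lemma ip_diff_smult_left: "ip n d (\<lambda>v. x v - s * z v) y = ip n d x y - s * ip n d z y"
  unfolding ip_def by (simp add: algebra_simps sum_subtractf sum_distrib_left)

lemma ip_smult_right: "ip n d x (\<lambda>v. s * z v) = s * ip n d x z"
  unfolding ip_def by (simp add: algebra_simps sum_distrib_left)

lemma orth_zero:
  assumes orth: "\<forall>i<m. \<forall>j<m. i \<noteq> j \<longrightarrow> ip n d (q i) (q j) = 0"
    and pos: "\<forall>i<m. ip n d (q i) (q i) > 0"
    and x: "x \<in> spn m q" and xo: "\<forall>i<m. ip n d x (q i) = 0"
  shows "x = (\<lambda>v. 0)"
proof -
  obtain \<rho> where xr: "x = (\<lambda>v. \<Sum>i<m. \<rho> i * q i v)" using x unfolding spn_def by blast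
  have "\<rho> i = 0" if i: "i < m" for i
  proof -
    have "ip n d x (q i) = (\<Sum>l<m. \<rho> l * ip n d (q l) (q i))"
      unfolding xr by (rule ip_sum_left) simp
    also have "\<dots> = (\<Sum>l<m. if l = i then \<rho> i * ip n d (q i) (q i) else 0)"
      by (rule sum.cong) (use orth i in auto)
    also have "\<dots> = \<rho> i * ip n d (q i) (q i)" using i by simp
    finally show ?thesis using xo pos i by auto
  qed
  then show ?thesis unfolding xr by simp
qed

lemma mv_self_adj:
  assumes sym: "\<forall>v<n. \<forall>w<n. d v * a v w = d w * a w v"
  shows "ip n d (mv n a x) y = ip n d x (mv n a y)"
proof -
  have "ip n d (mv n a x) y = (\<Sum>v<n. \<Sum>w<n. d v * a v w * x w * y v)"
    unfolding ip_def mv_def by (simp add: sum_distrib_left sum_distrib_right mult_ac)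
  also have "\<dots> = (\<Sum>w<n. \<Sum>v<n. d v * a v w * x w * y v)" by (rule sum.swap)
  also have "\<dots> = (\<Sum>w<n. \<Sum>v<n. d w * a w v * x w * y v)"
    by (intro sum.cong refl) (use sym in auto)
  also have "\<dots> = ip n d x (mv n a y)"
    unfolding ip_def mv_def by (simp add: sum_distrib_left sum_distrib_right mult_ac)
  finally show ?thesis .
qed

lemma mv_diff_sum: "finite I \<Longrightarrow> mv n a (\<lambda>v. x v - (\<Sum>i\<in>I. f i * y i v)) = (\<lambda>v. mv n a x v - (\<Sum>i\<in>I. f i * mv n a (y i) v))"
  unfolding mv_def
  by (auto simp: algebra_simps sum_subtractf sum_distrib_left sum.swap[of _ "{..<n}"] intro!: ext)


lemma gs:
  fixes n m :: nat and a :: "nat\<Rightarrow>nat\<Rightarrow>real" and d :: "nat\<Rightarrow>real" and p t \<phi> :: "nat\<Rightarrow>nat\<Rightarrow>real"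
  assumes dpos: "\<forall>v<n. d v > 0"
    and sym: "\<forall>v<n. \<forall>w<n. d v * a v w = d w * a w v"
    and pz: "\<forall>j<m. zo n (p j)"
    and peig: "\<forall>j<m. mv n a (p j) = (\<lambda>v. \<Sum>l<Suc j. t l j * p l v)"
    and dual: "\<forall>i<m. \<forall>j<m. (\<Sum>v<n. \<phi> i v * p j v) = (if i = j then 1 else 0)"
  shows "\<exists>q. \<forall>j<m. zo n (q j) \<and> mv n a (q j) = (\<lambda>v. t j j * q j v) \<and> ip n d (q j) (q j) > 0
           \<and> (\<forall>i<m. i \<noteq> j \<longrightarrow> ip n d (q i) (q j) = 0)"
proof -
  have main: "m' \<le> m \<Longrightarrow> \<exists>q. \<forall>j<m'. zo n (q j) \<and> mv n a (q j) = (\<lambda>v. t j j * q j v) \<and> ip n d (q j) (q j) > 0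
           \<and> (\<forall>i<m'. i \<noteq> j \<longrightarrow> ip n d (q i) (q j) = 0) \<and> p j \<in> spn m' q
           \<and> (\<forall>l<m. j < l \<longrightarrow> (\<Sum>v<n. \<phi> l v * q j v) = 0)" for m'
  proof (induction m')
    case 0 then show ?case by simp
  next
    case (Suc k)
    then have k: "k < m" by simp
    from Suc obtain q where q: "\<forall>j<k. zo n (q j) \<and> mv n a (q j) = (\<lambda>v. t j j * q j v) \<and> ip n d (q j) (q j) > 0
           \<and> (\<forall>i<k. i \<noteq> j \<longrightarrow> ip n d (q i) (q j) = 0) \<and> p j \<in> spn k q
           \<and> (\<forall>l<m. j < l \<longrightarrow> (\<Sum>v<n. \<phi> l v * q j v) = 0)" by auto
    have qz: "\<And>j. j < k \<Longrightarrow> zo n (q j)" and qeig: "\<And>j. j < k \<Longrightarrow> mv n a (q j) = (\<lambda>v. t j j * q j v)"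
      and qpos: "\<And>j. j < k \<Longrightarrow> ip n d (q j) (q j) > 0"
      and qorth: "\<And>i j. i < k \<Longrightarrow> j < k \<Longrightarrow> i \<noteq> j \<Longrightarrow> ip n d (q i) (q j) = 0"
      and qspn: "\<And>j. j < k \<Longrightarrow> p j \<in> spn k q"
      and qphi: "\<And>j l. j < k \<Longrightarrow> l < m \<Longrightarrow> j < l \<Longrightarrow> (\<Sum>v<n. \<phi> l v * q j v) = 0"
      using q by auto
    define c where "c i = ip n d (p k) (q i) / ip n d (q i) (q i)" for i
    define qn where "qn = (\<lambda>v. p k v - (\<Sum>i<k. c i * q i v))"
    define q' where "q' = (\<lambda>i. if i < k then q i else qn)"
    have q'k: "q' k = qn" and q'i: "\<And>i. i < k \<Longrightarrow> q' i = q i" by (auto simp: q'_def)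
    have spk: "spn k q' = spn k q" by (rule spn_cong) (simp add: q'_def)
    have qnz: "zo n qn" using pz k qz unfolding zo_def qn_def by auto
    have orth1: "ip n d qn (q i) = 0" if i: "i < k" for i
    proof -
      have "ip n d qn (q i) = ip n d (p k) (q i) - (\<Sum>l<k. c l * ip n d (q l) (q i))"
        unfolding qn_def by (rule ip_diff_sum_left) simp
      also have "(\<Sum>l<k. c l * ip n d (q l) (q i)) = (\<Sum>l<k. if l = i then c i * ip n d (q i) (q i) else 0)"
        by (rule sum.cong) (use qorth i in auto)
      also have "\<dots> = c i * ip n d (q i) (q i)" using i by simp
      also have "\<dots> = ip n d (p k) (q i)" using qpos[OF i] by (simp add: c_def)
      finally show ?thesis by simp
    qed
    have phin: "(\<Sum>v<n. \<phi> l v * qn v) = (if l = k then 1 else 0)" if l: "l < m" "k \<le> l" for l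
    proof -
      have "(\<Sum>v<n. \<phi> l v * qn v) = (\<Sum>v<n. \<phi> l v * p k v) - (\<Sum>i<k. c i * (\<Sum>v<n. \<phi> l v * q i v))"
        unfolding qn_def by (simp add: algebra_simps sum_subtractf sum_distrib_left sum.swap[of _ "{..<n}"])
      also have "(\<Sum>i<k. c i * (\<Sum>v<n. \<phi> l v * q i v)) = 0"
        by (rule sum.neutral) (use qphi l in auto)
      finally show ?thesis using dual l k by simp
    qed
    have qnpos: "ip n d qn qn > 0"
    proof -
      have "(\<Sum>v<n. \<phi> k v * qn v) = 1" using phin[of k] k by simp
      then obtain v where v: "v < n" "qn v \<noteq> 0"
        by (metis (no_types, lifting) mult_zero_right sum.neutral zero_neq_one lessThan_iff)
      show ?thesis unfolding ip_def
        by (rule sum_pos2[of _ v]) (use v dpos in \<open>auto simp: mult.assoc zero_less_mult_iff zero_le_mult_iff less_imp_le\<close>)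
    qed
    have eig: "mv n a qn = (\<lambda>v. t k k * qn v)"
    proof -
      define r where "r = (\<lambda>v. mv n a qn v - t k k * qn v)"
      define r2 where "r2 = (\<lambda>v. (\<Sum>l<k. t l k * p l v) + (\<Sum>i<k. (t k k * c i - c i * t i i) * q i v))"
      have mvqn: "mv n a qn = (\<lambda>v. mv n a (p k) v - (\<Sum>i<k. c i * mv n a (q i) v))"
        unfolding qn_def by (rule mv_diff_sum) simp
      have "r = r2"
      proof
        fix v
        show "r v = r2 v"
        proof (cases "v < n")
          case True
          have "r v = (\<Sum>l<Suc k. t l k * p l v) - (\<Sum>i<k. c i * (t i i * q i v)) - t k k * (p k v - (\<Sum>i<k. c i * q i v))"
            unfolding r_def mvqn using peig k qeig by (simp add: qn_def)
          also have "\<dots> = r2 v"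
            unfolding r2_def by (simp add: algebra_simps sum.distrib sum_subtractf sum_distrib_left)
          finally show ?thesis .
        next
          case False
          then have "r v = 0" using qnz unfolding r_def mv_def zo_def by simp
          moreover have "r2 v = 0" using False pz qz k unfolding r2_def zo_def by simp
          ultimately show ?thesis by simp
        qed
      qed
      have r2s: "r2 \<in> spn k q"
        unfolding r2_def
        by (intro spn_add spn_sum) (auto intro: qspn spn_base)
      have "ip n d r (q i) = 0" if i: "i < k" for i
      proof -
        have "ip n d r (q i) = ip n d (mv n a qn) (q i) - t k k * ip n d qn (q i)"
          unfolding r_def by (rule ip_diff_smult_left)
        also have "ip n d (mv n a qn) (q i) = ip n d qn (mv n a (q i))" by (rule mv_self_adj[OF sym])
        also have "\<dots> = t i i * ip n d qn (q i)" using qeig[OF i] by (simp add: ip_smult_right)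
        finally show ?thesis using orth1[OF i] by simp
      qed
      then have "r = (\<lambda>v. 0)"
        using orth_zero[of k n d q r] qorth qpos \<open>r = r2\<close> r2s by auto
      then show ?thesis unfolding r_def by (metis eq_iff_diff_eq_0)
    qed
    have pk: "p k \<in> spn (Suc k) q'"
      unfolding spn_def
    proof (intro CollectI exI[of _ "\<lambda>i. if i < k then c i else 1"] ext)
      fix v
      have "(\<Sum>i<Suc k. (if i < k then c i else 1) * q' i v) = (\<Sum>i<k. c i * q i v) + qn v"
        by (simp add: q'_def)
      then show "p k v = (\<Sum>i<Suc k. (if i < k then c i else 1) * q' i v)" by (simp add: qn_def)
    qed
    show ?case
    proof (intro exI[of _ q'] allI impI conjI)
      fix j assume j: "j < Suc k"
      show "zo n (q' j)" using j qz qnz by (auto simp: q'_def)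
      show "mv n a (q' j) = (\<lambda>v. t j j * q' j v)" using j qeig eig by (auto simp: q'_def less_Suc_eq)
      show "ip n d (q' j) (q' j) > 0" using j qpos qnpos by (auto simp: q'_def)
      show "p j \<in> spn (Suc k) q'"
      proof (cases "j < k")
        case True then show ?thesis using qspn spk spn_Suc by auto
      next
        case False then have "j = k" using j by simp
        then show ?thesis using pk by simp
      qed
    next
      fix j l assume j: "j < Suc k" and l: "l < m" "j < l"
      show "(\<Sum>v<n. \<phi> l v * q' j v) = 0"
        using j qphi phin l by (auto simp: q'_def)
    next
      fix j i assume j: "j < Suc k" and i: "i < Suc k" "i \<noteq> j"
      show "ip n d (q' i) (q' j) = 0"
        using j i qorth orth1 ip_comm by (auto simp: q'_def less_Suc_eq)
    qed
  qed
  from main[of m] show ?thesis by auto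
qed


lemma cs_sum: "finite S \<Longrightarrow> (\<Sum>v\<in>S. x v)^2 \<le> real (card S) * (\<Sum>v\<in>S. (x v)^2)"
proof -
  assume S: "finite S"
  have "0 \<le> (\<Sum>u\<in>S. \<Sum>v\<in>S. (x u - x v)^2)" by (intro sum_nonneg) auto
  also have "(\<Sum>u\<in>S. \<Sum>v\<in>S. (x u - x v)^2) = (\<Sum>u\<in>S. \<Sum>v\<in>S. (x u)^2 + (x v)^2 - 2 * (x u * x v))"
    by (intro sum.cong refl) (simp add: power2_eq_square algebra_simps)
  also have "\<dots> = 2 * (real (card S) * (\<Sum>v\<in>S. (x v)^2)) - 2 * (\<Sum>v\<in>S. x v)^2"
    by (simp add: sum_subtractf sum.distrib sum_distrib_left sum_distrib_right power2_eq_square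
          algebra_simps)
  finally show ?thesis by simp
qed

lemma mv_sum: "finite I \<Longrightarrow> mv n a (\<lambda>v. \<Sum>i\<in>I. f i * y i v) = (\<lambda>v. \<Sum>i\<in>I. f i * mv n a (y i) v)"
  unfolding mv_def
  by (auto simp: algebra_simps sum_distrib_left sum.swap[of _ "{..<n}"] intro!: ext)

lemma orth_expand:
  fixes m :: nat
  assumes orth: "\<forall>i<m. \<forall>j<m. i \<noteq> j \<longrightarrow> ip n d (q i) (q j) = 0"
  shows "ip n d (\<lambda>v. \<Sum>j<m. \<beta> j * q j v) (\<lambda>v. \<Sum>j<m. \<alpha> j * q j v) = (\<Sum>j<m. \<beta> j * \<alpha> j * ip n d (q j) (q j))"
proof -
  have "ip n d (\<lambda>v. \<Sum>j<m. \<beta> j * q j v) (\<lambda>v. \<Sum>j<m. \<alpha> j * q j v)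
      = (\<Sum>j<m. \<beta> j * ip n d (q j) (\<lambda>v. \<Sum>j<m. \<alpha> j * q j v))"
    by (rule ip_sum_left) simp
  also have "\<dots> = (\<Sum>j<m. \<beta> j * \<alpha> j * ip n d (q j) (q j))"
  proof (rule sum.cong[OF refl])
    fix j assume j: "j \<in> {..<m}"
    have "ip n d (q j) (\<lambda>v. \<Sum>j<m. \<alpha> j * q j v) = ip n d (\<lambda>v. \<Sum>j<m. \<alpha> j * q j v) (q j)"
      by (rule ip_comm)
    also have "\<dots> = (\<Sum>i<m. \<alpha> i * ip n d (q i) (q j))" by (rule ip_sum_left) simp
    also have "\<dots> = (\<Sum>i<m. if i = j then \<alpha> j * ip n d (q j) (q j) else 0)"
      by (rule sum.cong) (use orth j in auto)
    also have "\<dots> = \<alpha> j * ip n d (q j) (q j)" using j by simp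
    finally show "\<beta> j * ip n d (q j) (\<lambda>v. \<Sum>j<m. \<alpha> j * q j v) = \<beta> j * \<alpha> j * ip n d (q j) (q j)"
      by simp
  qed
  finally show ?thesis .
qed

lemma mat_mult_entry: "X \<in> carrier_mat n n \<Longrightarrow> Y \<in> carrier_mat n n \<Longrightarrow> i < n \<Longrightarrow> j < n \<Longrightarrow>
   (X * Y) $$ (i,j) = (\<Sum>w<n. X $$ (i,w) * Y $$ (w,j))"
  by (auto simp: scalar_prod_def atLeast0LessThan intro!: sum.cong)


lemma lin_sys:
  fixes c :: "nat \<Rightarrow> nat \<Rightarrow> real"
  shows "r < m \<Longrightarrow> \<exists>a. (\<exists>j<m. a j \<noteq> 0) \<and> (\<forall>i<r. (\<Sum>j<m. c i j * a j) = 0)"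
proof (induction m arbitrary: r c)
  case 0 thus ?case by simp
next
  case (Suc m)
  show ?case
  proof (cases "\<forall>i<r. c i m = 0")
    case True
    let ?a = "\<lambda>j. if j = m then 1 else (0::real)"
    have "\<forall>i<r. (\<Sum>j<Suc m. c i j * ?a j) = 0" using True by simp
    then show ?thesis by (intro exI[of _ ?a]) auto
  next
    case False
    then obtain i0 where i0: "i0 < r" "c i0 m \<noteq> 0" by auto
    define g where "g i = (if i < i0 then i else Suc i)" for i
    define c' where "c' i j = c (g i) j - c (g i) m / c i0 m * c i0 j" for i j
    have "r - 1 < m" using Suc.prems i0 by auto
    from Suc.IH[OF this, of c'] obtain a' where a': "\<exists>j<m. a' j \<noteq> 0" "\<forall>i<r-1. (\<Sum>j<m. c' i j * a' j) = 0" by blast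
    define a where "a j = (if j < m then a' j else - (\<Sum>j<m. c i0 j * a' j) / c i0 m)" for j
    show ?thesis
    proof (intro exI[of _ a] conjI)
      show "\<exists>j<Suc m. a j \<noteq> 0" using a'(1) by (auto simp: a_def)
      show "\<forall>i<r. (\<Sum>j<Suc m. c i j * a j) = 0"
      proof (intro allI impI)
        fix i assume i: "i < r"
        have e: "(\<Sum>j<m. c i j * a j) = (\<Sum>j<m. c i j * a' j)"
          by (rule sum.cong) (auto simp: a_def)
        have s: "(\<Sum>j<Suc m. c i j * a j) = (\<Sum>j<m. c i j * a' j) - c i m / c i0 m * (\<Sum>j<m. c i0 j * a' j)"
          using e by (simp add: a_def)
        show "(\<Sum>j<Suc m. c i j * a j) = 0"
        proof (cases "i = i0")
          case True then show ?thesis using s i0 by simp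
        next
          case False
          define i' where "i' = (if i < i0 then i else i - 1)"
          have gi: "g i' = i" "i' < r - 1" using False i i0 by (auto simp: g_def i'_def)
          have "(\<Sum>j<m. c' i' j * a' j) = 0" using a'(2) gi by auto
          moreover have "(\<Sum>j<m. c' i' j * a' j) = (\<Sum>j<m. c i j * a' j) - c i m / c i0 m * (\<Sum>j<m. c i0 j * a' j)"
            unfolding c'_def gi by (simp add: sum_subtractf sum_distrib_left algebra_simps)
          ultimately show ?thesis using s by simp
        qed
      qed
    qed
  qed
qed


lemma key:
  fixes N M :: nat and C :: "nat \<Rightarrow> nat \<Rightarrow> real" and ls :: "real list" and k :: nat
  assumes covered: "\<And>v. v < N \<Longrightarrow> \<exists>j<M. v \<in> hedge N C j"
    and ordered: "\<And>i j. i \<le> j \<Longrightarrow> j < M \<Longrightarrow> card (hedge N C i) \<le> card (hedge N C j)"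
    and eig: "sorted_eigenvalues (hlaplacian N M C) ls"
    and kN: "k < N" and kM: "k < M"
  shows "ls ! (N - k - 1) \<le> real (card (hedge N C (M - 1 - k)))"
proof (rule ccontr)
  define cc where "cc = real (card (hedge N C (M - 1 - k)))"
  assume "\<not> ls ! (N - k - 1) \<le> real (card (hedge N C (M - 1 - k)))"
  then have big: "cc < ls ! (N - k - 1)" by (simp add: cc_def)
  define A where "A = hlaplacian N M C"
  define d where "d v = hdeg M C v" for v
  define a where "a v w = A $$ (v,w)" for v w
  have dpos: "\<forall>v<N. d v > 0"
  proof (intro allI impI)
    fix v assume v: "v < N"
    obtain j where j: "j < M" "C v j \<noteq> 0" using covered[OF v] by (auto simp: hedge_def)
    show "d v > 0" unfolding d_def hdeg_def
      by (rule sum_pos2[of _ j]) (use j in auto)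
  qed
  have dak: "d v * a v w = (\<Sum>j<M. C v j * C w j)" if "v < N" "w < N" for v w
  proof -
    have "hdeg M C v \<noteq> 0" using dpos that by (auto simp: d_def)
    then show ?thesis using that by (simp add: a_def A_def hlaplacian_def d_def)
  qed
  have sym: "\<forall>v<N. \<forall>w<N. d v * a v w = d w * a w v"
    using dak by (simp add: mult.commute)
  have A: "A \<in> carrier_mat N N" by (simp add: A_def hlaplacian_def)
  from eig have len: "length ls = N" and srt: "sorted ls" and cp: "char_poly A = (\<Prod>a\<leftarrow>ls. [:- a, 1:])"
    unfolding sorted_eigenvalues_def A_def by (auto simp: hlaplacian_def)
  have cp': "char_poly A = (\<Prod>a\<leftarrow>rev ls. [:- a, 1:])" using cp
    by (metis mset_rev mset_map prod_mset_prod_list rev_map)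
  obtain T P Q where sd: "schur_decomposition A (rev ls) = (T,P,Q)" by (metis prod_cases3)
  from schur_decomposition[OF A cp' sd] have sw: "similar_mat_wit A T P Q" and ut: "upper_triangular T"
    and dg: "diag_mat T = rev ls" by auto
  from sw A have T: "T \<in> carrier_mat N N" and P: "P \<in> carrier_mat N N" and Q: "Q \<in> carrier_mat N N"
    and PQ: "P * Q = 1\<^sub>m N" and QP: "Q * P = 1\<^sub>m N" and AE: "A = P * T * Q"
    unfolding similar_mat_wit_def Let_def by auto
  have AP: "A * P = P * T"
  proof -
    have "A * P = (P * T) * (Q * P)" unfolding AE using P T Q
      by (metis assoc_mult_mat mult_carrier_mat)
    also have "\<dots> = P * T" using QP P T by simp
    finally show ?thesis .
  qed
  define p where "p j v = (if v < N then P $$ (v,j) else 0)" for j v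
  define t where "t l j = T $$ (l,j)" for l j
  define \<phi> where "\<phi> i v = Q $$ (i,v)" for i v
  define m where "m = Suc k"
  have mN: "m \<le> N" using kN by (simp add: m_def)
  have pz: "\<forall>j<m. zo N (p j)" by (simp add: zo_def p_def)
  have peig: "\<forall>j<m. mv N a (p j) = (\<lambda>v. \<Sum>l<Suc j. t l j * p l v)"
  proof (intro allI impI ext)
    fix j v assume j: "j < m"
    then have jN: "j < N" using mN by simp
    show "mv N a (p j) v = (\<Sum>l<Suc j. t l j * p l v)"
    proof (cases "v < N")
      case True
      have "mv N a (p j) v = (\<Sum>w<N. A $$ (v,w) * P $$ (w,j))"
        using True by (simp add: mv_def a_def p_def)
      also have "\<dots> = (A * P) $$ (v,j)" using mat_mult_entry[OF A P True jN] by simp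
      also have "\<dots> = (P * T) $$ (v,j)" by (simp add: AP)
      also have "\<dots> = (\<Sum>l<N. P $$ (v,l) * T $$ (l,j))" using mat_mult_entry[OF P T True jN] by simp
      also have "\<dots> = (\<Sum>l<Suc j. P $$ (v,l) * T $$ (l,j))"
      proof (rule sum.mono_neutral_right)
        show "\<forall>l\<in>{..<N} - {..<Suc j}. P $$ (v,l) * T $$ (l,j) = 0"
          using ut T unfolding upper_triangular_def by auto
      qed (use jN in auto)
      also have "\<dots> = (\<Sum>l<Suc j. t l j * p l v)"
        using True by (simp add: t_def p_def mult.commute)
      finally show ?thesis .
    next
      case False then show ?thesis by (simp add: mv_def p_def)
    qed
  qed
  have dual: "\<forall>i<m. \<forall>j<m. (\<Sum>v<N. \<phi> i v * p j v) = (if i = j then 1 else 0)"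
  proof (intro allI impI)
    fix i j assume "i < m" "j < m"
    then have ij: "i < N" "j < N" using mN by auto
    have "(\<Sum>v<N. \<phi> i v * p j v) = (\<Sum>v<N. Q $$ (i,v) * P $$ (v,j))"
      by (rule sum.cong) (auto simp: \<phi>_def p_def)
    also have "\<dots> = (Q * P) $$ (i,j)" using mat_mult_entry[OF Q P ij] by simp
    finally show "(\<Sum>v<N. \<phi> i v * p j v) = (if i = j then 1 else 0)" using QP ij by simp
  qed
  from gs[OF dpos sym pz peig dual] obtain q where q: "\<forall>j<m. zo N (q j) \<and> mv N a (q j) = (\<lambda>v. t j j * q j v) \<and> ip N d (q j) (q j) > 0
           \<and> (\<forall>i<m. i \<noteq> j \<longrightarrow> ip N d (q i) (q j) = 0)" by blast
  have qorth: "\<forall>i<m. \<forall>j<m. i \<noteq> j \<longrightarrow> ip N d (q i) (q j) = 0" using q by blast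
  have tj: "t j j > cc" if j: "j < m" for j
  proof -
    have jN: "j < N" using j mN by simp
    have "t j j = diag_mat T ! j" using T jN by (simp add: t_def diag_mat_def)
    also have "\<dots> = ls ! (N - Suc j)" using dg len jN by (simp add: rev_nth)
    finally have "t j j = ls ! (N - Suc j)" .
    moreover have "ls ! (N - k - 1) \<le> ls ! (N - Suc j)"
      using srt len j kN by (intro sorted_nth_mono) (auto simp: m_def)
    ultimately show ?thesis using big by simp
  qed
  define g where "g i j = (\<Sum>v<N. C v (M - 1 - i) * q j v)" for i j
  obtain \<alpha> where \<alpha>: "\<exists>j<m. \<alpha> j \<noteq> 0" "\<forall>i<k. (\<Sum>j<m. g i j * \<alpha> j) = 0"
    using lin_sys[of k m g] by (auto simp: m_def)
  then obtain j0 where j0: "j0 < m" "\<alpha> j0 \<noteq> 0" by blast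
  define f where "f = (\<lambda>v. \<Sum>j<m. \<alpha> j * q j v)"
  have mvf: "mv N a f = (\<lambda>v. \<Sum>j<m. (\<alpha> j * t j j) * q j v)"
  proof -
    have "mv N a f = (\<lambda>v. \<Sum>j<m. \<alpha> j * mv N a (q j) v)" unfolding f_def by (rule mv_sum) simp
    also have "\<dots> = (\<lambda>v. \<Sum>j<m. (\<alpha> j * t j j) * q j v)"
      by (intro ext sum.cong refl) (use q in auto)
    finally show ?thesis .
  qed
  have lhs: "ip N d (mv N a f) f = (\<Sum>j<m. (\<alpha> j * t j j) * \<alpha> j * ip N d (q j) (q j))"
    unfolding mvf by (subst f_def, rule orth_expand[OF qorth])
  have ff: "ip N d f f = (\<Sum>j<m. \<alpha> j * \<alpha> j * ip N d (q j) (q j))"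
    unfolding f_def by (rule orth_expand[OF qorth])
  have gt: "cc * ip N d f f < ip N d (mv N a f) f"
  proof -
    have "ip N d (mv N a f) f - cc * ip N d f f = (\<Sum>j<m. (\<alpha> j * \<alpha> j) * ((t j j - cc) * ip N d (q j) (q j)))"
      unfolding lhs ff by (simp add: sum_distrib_left sum_subtractf algebra_simps)
    also have "\<dots> > 0"
    proof (rule sum_pos2[of _ j0])
      show "0 < \<alpha> j0 * \<alpha> j0 * ((t j0 j0 - cc) * ip N d (q j0) (q j0))"
        using j0 tj[OF j0(1)] q by (intro mult_pos_pos[of "\<alpha> j0 * \<alpha> j0"]) (auto simp: zero_less_mult_iff)
      fix i assume i: "i \<in> {..<m}"
      have "0 \<le> \<alpha> i * \<alpha> i" by simp
      moreover have "0 \<le> (t i i - cc) * ip N d (q i) (q i)"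
        using tj[of i] q i by (intro mult_nonneg_nonneg) (auto simp: less_imp_le)
      ultimately show "0 \<le> \<alpha> i * \<alpha> i * ((t i i - cc) * ip N d (q i) (q i))"
        by (rule mult_nonneg_nonneg)
    qed (use j0 in auto)
    finally show ?thesis by simp
  qed
  define s where "s h = (\<Sum>v<N. C v h * f v)" for h
  have constr: "s h = 0" if h: "M - k \<le> h" "h < M" for h
  proof -
    define i where "i = M - 1 - h"
    have i: "i < k" "M - 1 - i = h" using h kM by (auto simp: i_def)
    have "s h = (\<Sum>j<m. g i j * \<alpha> j)"
      unfolding s_def f_def g_def i
      by (simp add: sum_distrib_left sum.swap[of _ "{..<N}"] mult_ac)
    then show ?thesis using \<alpha>(2) i by simp
  qed
  have form: "ip N d (mv N a f) f = (\<Sum>h<M. (s h)^2)"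
  proof -
    have "ip N d (mv N a f) f = (\<Sum>v<N. \<Sum>w<N. \<Sum>h<M. C v h * f v * (C w h * f w))"
      unfolding ip_def
    proof (rule sum.cong[OF refl])
      fix v assume v: "v \<in> {..<N}"
      have "d v * mv N a f v * f v = (\<Sum>w<N. (d v * a v w) * f w * f v)"
        using v by (simp add: mv_def sum_distrib_left sum_distrib_right mult_ac)
      also have "\<dots> = (\<Sum>w<N. \<Sum>h<M. C v h * f v * (C w h * f w))"
      proof (rule sum.cong[OF refl])
        fix w assume w: "w \<in> {..<N}"
        have "(d v * a v w) * f w * f v = (\<Sum>h<M. C v h * C w h) * (f w * f v)"
          using v w dak by simp
        also have "\<dots> = (\<Sum>h<M. C v h * f v * (C w h * f w))"
          unfolding sum_distrib_right by (rule sum.cong) (simp_all add: mult_ac)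
        finally show "(d v * a v w) * f w * f v = (\<Sum>h<M. C v h * f v * (C w h * f w))" .
      qed
      finally show "d v * mv N a f v * f v = (\<Sum>w<N. \<Sum>h<M. C v h * f v * (C w h * f w))" .
    qed
    also have "\<dots> = (\<Sum>v<N. \<Sum>h<M. \<Sum>w<N. C v h * f v * (C w h * f w))"
      by (rule sum.cong[OF refl], rule sum.swap)
    also have "\<dots> = (\<Sum>h<M. \<Sum>v<N. \<Sum>w<N. C v h * f v * (C w h * f w))"
      by (rule sum.swap)
    also have "\<dots> = (\<Sum>h<M. (s h)^2)"
      by (simp add: s_def power2_eq_square sum_product)
    finally show ?thesis .
  qed
  have red: "(\<Sum>h<M. (s h)^2) = (\<Sum>h<M - k. (s h)^2)"
    by (rule sum.mono_neutral_right) (use constr in auto)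
  have cc0: "0 \<le> cc" by (simp add: cc_def)
  have each: "(s h)^2 \<le> cc * (\<Sum>v<N. (C v h)^2 * (f v)^2)" if h: "h < M - k" for h
  proof -
    have hs: "hedge N C h \<subseteq> {..<N}" by (auto simp: hedge_def)
    have "s h = (\<Sum>v\<in>hedge N C h. C v h * f v)"
      unfolding s_def by (rule sum.mono_neutral_right) (auto simp: hedge_def)
    then have "(s h)^2 \<le> real (card (hedge N C h)) * (\<Sum>v\<in>hedge N C h. (C v h * f v)^2)"
      using cs_sum[of "hedge N C h"] by (simp add: hedge_def)
    also have "\<dots> \<le> cc * (\<Sum>v<N. (C v h * f v)^2)"
    proof (rule mult_mono)
      show "real (card (hedge N C h)) \<le> cc" unfolding cc_def using ordered[of h "M - 1 - k"] h kM by simp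
      show "(\<Sum>v\<in>hedge N C h. (C v h * f v)^2) \<le> (\<Sum>v<N. (C v h * f v)^2)"
        by (rule sum_mono2) (use hs in auto)
    qed (use cc0 in \<open>auto intro: sum_nonneg\<close>)
    finally show ?thesis by (simp add: power_mult_distrib)
  qed
  have "(\<Sum>h<M - k. (s h)^2) \<le> (\<Sum>h<M - k. cc * (\<Sum>v<N. (C v h)^2 * (f v)^2))"
    by (rule sum_mono) (use each in auto)
  also have "\<dots> = cc * (\<Sum>v<N. (\<Sum>h<M - k. (C v h)^2) * (f v)^2)"
    by (simp add: sum_distrib_left sum_distrib_right sum.swap[of _ "{..<N}"])
  also have "\<dots> \<le> cc * (\<Sum>v<N. d v * f v * f v)"
  proof (rule mult_left_mono[OF sum_mono cc0])
    fix v assume "v \<in> {..<N}"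
    have "(\<Sum>h<M - k. (C v h)^2) \<le> d v" unfolding d_def hdeg_def
      by (rule sum_mono2) auto
    then show "(\<Sum>h<M - k. (C v h)^2) * (f v)^2 \<le> d v * f v * f v"
      by (simp add: power2_eq_square mult.assoc mult_right_mono)
  qed
  also have "\<dots> = cc * ip N d f f" by (simp add: ip_def)
  finally have "ip N d (mv N a f) f \<le> cc * ip N d f f" using form red by simp
  then show False using gt by simp
qed


theorem mainTheorem9:
  fixes N M :: nat and C :: "nat \<Rightarrow> nat \<Rightarrow> real" and ls :: "real list"
  assumes nonempty_edges: "\<And>j. j < M \<Longrightarrow> hedge N C j \<noteq> {}"
    and covered: "\<And>v. v < N \<Longrightarrow> \<exists>j<M. v \<in> hedge N C j"
    and conn: "hconnected N M C"
    and ordered: "\<And>i j. i \<le> j \<Longrightarrow> j < M \<Longrightarrow> card (hedge N C i) \<le> card (hedge N C j)"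
    and eig: "sorted_eigenvalues (hlaplacian N M C) ls"
  shows "(N \<ge> 2 \<and> M \<ge> 2 \<longrightarrow>
            ls ! (N - 2) \<le> max (real (card (hedge N C (M - 1))) - 1)
                                 (real (card (hedge N C (M - 2)))))
       \<and> (\<forall>k. 1 \<le> k \<and> k \<le> min N M - 1 \<longrightarrow>
            ls ! (N - k - 1) \<le>
              Max ((\<lambda>i. real (card (hedge N C (M - 1 - i))) - real k + real i) ` {0..k}))"
proof (intro conjI impI allI)
  assume h: "N \<ge> 2 \<and> M \<ge> 2"
  have "ls ! (N - 1 - 1) \<le> real (card (hedge N C (M - 1 - 1)))"
    using key[OF covered ordered eig, of 1] h by auto
  moreover have "N - 1 - 1 = N - 2" "M - 1 - 1 = M - 2" by auto
  ultimately show "ls ! (N - 2) \<le> max (real (card (hedge N C (M - 1))) - 1)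
                                 (real (card (hedge N C (M - 2))))"
    by (metis max.coboundedI2)
next
  fix k assume k: "1 \<le> k \<and> k \<le> min N M - 1"
  then have kN: "k < N" and kM: "k < M" by auto
  have "ls ! (N - k - 1) \<le> real (card (hedge N C (M - 1 - k)))"
    using key[OF covered ordered eig kN kM] .
  also have "\<dots> = real (card (hedge N C (M - 1 - k))) - real k + real k" by simp
  also have "\<dots> \<le> Max ((\<lambda>i. real (card (hedge N C (M - 1 - i))) - real k + real i) ` {0..k})"
    by (rule Max_ge) (auto intro!: image_eqI[where x=k])
  finally show "ls ! (N - k - 1) \<le>
              Max ((\<lambda>i. real (card (hedge N C (M - 1 - i))) - real k + real i) ` {0..k})" .
qed

end
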